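(* Let $n\ge2$, $k\ge1$, and let $\mathbf x\neq\mathbf y$ be vertices of $H_{n,k}$ whose longest common prefix has length $i$ (so $0\le i\le k-1$, i.e. $x_j=y_j$ for $j\le i$ and $x_{i+1}\ne y_{i+1}$). Then the distance between $\mathbf x$ and $\mathbf y$ in $H_{n,k}$ is at most $2(k-i)-1$.
   Context: Let $n\ge 2$ and $k\ge 1$ be integers. $H_{n,k}$ is the simple undirected graph with vertex set $V_{n,k}=\mathbb{Z}_n^k$ (so $|V_{n,k}|=n^k$), whose vertices are written as strings $x_1x_2\ldots x_k$ with $x_j\in\mathbb{Z}_n=\{0,1,\ldots,n-1\}$. Two distinct vertices are adjacent if and only if they are related by one of the following rules. For $i=0$ the prefix $x_1\ldots x_i$ is empty, and "$0\ldots0$" denotes a string of zeros completing the word to length $k$. (R1) $x_1\ldots x_{k-1}x_k\sim x_1\ldots x_{k-1}y_k$ whenever $y_k\neq x_k$. (R2) For $0\le i\le k-2$: $x_1\ldots x_i0\ldots0\sim x_1\ldots x_ix_{i+1}\ldots x_k$ whenever $x_j\neq 0$ for all $i+1\le j\le k$. (R3) For $1\le i\le k-1$: $x_1\ldots x_{i-1}x_i0\ldots0\sim x_1\ldots x_{i-1}y_i0\ldots0$ whenever $x_i,y_i\neq0$ and $x_i\ne y_i$. In particular, $H_{n,1}$ is the complete graph $K_n$. *)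

theory Defs
  imports Main "HOL-Library.Extended_Nat"
begin

text \<open>Vertices of H_{n,k}: words x_1...x_k over Z_n, represented as lists of length k
  with entries in {0..<n}; the paper's position j corresponds to list index j-1.\<close>

definition hverts :: "nat \<Rightarrow> nat \<Rightarrow> nat list set" where
  "hverts n k = {x. length x = k \<and> (\<forall>a\<in>set x. a < n)}"

definition R1 :: "nat \<Rightarrow> nat list \<Rightarrow> nat list \<Rightarrow> bool" where
  "R1 k x y \<longleftrightarrow> take (k - 1) x = take (k - 1) y \<and> x ! (k - 1) \<noteq> y ! (k - 1)"

definition R2 :: "nat \<Rightarrow> nat list \<Rightarrow> nat list \<Rightarrow> bool" where
  "R2 k x y \<longleftrightarrow> (\<exists>i p s. i \<le> k - 2 \<and> k \<ge> 2 \<and> length p = i \<and> length s = k - i \<and>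
      (\<forall>a\<in>set s. a \<noteq> 0) \<and> x = p @ replicate (k - i) 0 \<and> y = p @ s)"

definition R3 :: "nat \<Rightarrow> nat list \<Rightarrow> nat list \<Rightarrow> bool" where
  "R3 k x y \<longleftrightarrow> (\<exists>i p a b. 1 \<le> i \<and> i \<le> k - 1 \<and> length p = i - 1 \<and>
      a \<noteq> 0 \<and> b \<noteq> 0 \<and> a \<noteq> b \<and>
      x = p @ [a] @ replicate (k - i) 0 \<and> y = p @ [b] @ replicate (k - i) 0)"

definition hadj :: "nat \<Rightarrow> nat \<Rightarrow> nat list \<Rightarrow> nat list \<Rightarrow> bool" where
  "hadj n k x y \<longleftrightarrow> x \<in> hverts n k \<and> y \<in> hverts n k \<and> x \<noteq> y \<and>
     (R1 k x y \<or> R2 k x y \<or> R2 k y x \<or> R3 k x y)"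

definition hwalk :: "nat \<Rightarrow> nat \<Rightarrow> nat list list \<Rightarrow> bool" where
  "hwalk n k ws \<longleftrightarrow> ws \<noteq> [] \<and> set ws \<subseteq> hverts n k \<and>
     (\<forall>j. Suc j < length ws \<longrightarrow> hadj n k (ws ! j) (ws ! Suc j))"

text \<open>Graph distance (infinity if no walk exists).\<close>
definition hdist :: "nat \<Rightarrow> nat \<Rightarrow> nat list \<Rightarrow> nat list \<Rightarrow> enat" where
  "hdist n k x y = (INF ws \<in> {ws. hwalk n k ws \<and> hd ws = x \<and> last ws = y}.
                      enat (length ws - 1))"

end

theory Submission
  imports Defs
begin

inductive reach :: "nat \<Rightarrow> nat \<Rightarrow> nat list \<Rightarrow> nat list \<Rightarrow> nat \<Rightarrow> bool" for n k where
  r0: "x \<in> hverts n k \<Longrightarrow> reach n k x x 0"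
| rS: "hadj n k x y \<Longrightarrow> reach n k y z d \<Longrightarrow> reach n k x z (Suc d)"

lemma reach_walk: "reach n k x z d \<Longrightarrow> \<exists>ws. hwalk n k ws \<and> hd ws = x \<and> last ws = z \<and> length ws = Suc d"
proof (induction rule: reach.induct)
  case (r0 x)
  then show ?case by (intro exI[of _ "[x]"]) (auto simp: hwalk_def)
next
  case (rS x y z d)
  then obtain ws where ws: "hwalk n k ws" "hd ws = y" "last ws = z" "length ws = Suc d" by blast
  have "hwalk n k (x # ws)"
    unfolding hwalk_def
  proof (intro conjI allI impI)
    show "set (x # ws) \<subseteq> hverts n k" using ws rS.hyps by (auto simp: hwalk_def hadj_def)
    fix j assume j: "Suc j < length (x # ws)"
    show "hadj n k ((x # ws) ! j) ((x # ws) ! Suc j)"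
    proof (cases j)
      case 0 then show ?thesis using ws rS.hyps by (cases ws) auto
    next
      case (Suc j') then show ?thesis using ws j by (auto simp: hwalk_def)
    qed
  qed simp
  then show ?case using ws by (intro exI[of _ "x # ws"]) (cases ws, auto)
qed

lemma reach_trans: "reach n k x y a \<Longrightarrow> reach n k y z b \<Longrightarrow> reach n k x z (a + b)"
  by (induction rule: reach.induct) (auto intro: reach.intros)

lemma hadj_sym: "hadj n k x y \<Longrightarrow> hadj n k y x"
  unfolding hadj_def R1_def R3_def by metis

lemma reach_one: "hadj n k x y \<Longrightarrow> reach n k x y 1"
proof -
  assume h: "hadj n k x y"
  then have "reach n k y y 0" by (intro reach.r0) (auto simp: hadj_def)
  with h show ?thesis using reach.rS by fastforce
qed

lemma reach_sym: "reach n k x y d \<Longrightarrow> reach n k y x d"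
proof (induction rule: reach.induct)
  case (r0 x) then show ?case by (rule reach.r0)
next
  case (rS x y z d)
  have "reach n k y x 1" using rS.hyps hadj_sym reach_one by blast
  from reach_trans[OF rS.IH this] show ?case by simp
qed

lemma adj1:
  assumes "length q + r = k" "r \<ge> 1" "length s = r" "\<forall>a\<in>set s. a \<noteq> 0 \<and> a < n"
    "\<forall>a\<in>set q. a < n" "n \<ge> 2"
  shows "hadj n k (q @ replicate r 0) (q @ s)"
proof -
  obtain c s' where s: "s = c # s'" using assms by (cases s) auto
  have ne: "q @ replicate r 0 \<noteq> q @ s" using assms s by (cases r) auto
  have hv: "q @ replicate r 0 \<in> hverts n k" "q @ s \<in> hverts n k"
    using assms by (auto simp: hverts_def)
  show ?thesis
  proof (cases "r \<ge> 2")
    case True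
    have "R2 k (q @ replicate r 0) (q @ s)" unfolding R2_def
      using assms True by (intro exI[of _ "length q"] exI[of _ q] exI[of _ s]) auto
    then show ?thesis using ne hv by (auto simp: hadj_def)
  next
    case False
    then have "r = 1" using assms by auto
    then have "R1 k (q @ replicate r 0) (q @ s)" unfolding R1_def
      using assms s by (auto simp: nth_append)
    then show ?thesis using ne hv by (auto simp: hadj_def)
  qed
qed

lemma adj3:
  assumes "length q + 1 + r = k" "r \<ge> 1" "a \<noteq> 0" "b \<noteq> 0" "a \<noteq> b" "a < n" "b < n"
    "\<forall>c\<in>set q. c < n"
  shows "hadj n k (q @ [a] @ replicate r 0) (q @ [b] @ replicate r 0)"
proof -
  have "R3 k (q @ [a] @ replicate r 0) (q @ [b] @ replicate r 0)" unfolding R3_def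
    using assms by (intro exI[of _ "length q + 1"] exI[of _ q] exI[of _ a] exI[of _ b]) auto
  then show ?thesis using assms by (auto simp: hadj_def hverts_def)
qed

lemma core:
  assumes n2: "n \<ge> 2"
  shows "\<forall>q. length q + length t = k \<longrightarrow> (\<forall>a\<in>set q. a < n) \<longrightarrow> (\<forall>a\<in>set t. a < n) \<longrightarrow>
     (\<exists>d\<le>length t. reach n k (q @ t) (q @ replicate (length t) 0) d) \<and>
     (\<exists>s d. length s = length t \<and> (\<forall>a\<in>set s. a \<noteq> 0 \<and> a < n) \<and> d \<le> length t \<and>
        reach n k (q @ t) (q @ s) d)"
proof (induction t)
  case Nil
  show ?case
  proof (intro allI impI)
    fix q :: "nat list" assume "length q + length [] = k" "\<forall>a\<in>set q. a < n"
    then have "reach n k q q 0" by (intro reach.r0) (auto simp: hverts_def)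
    then show "(\<exists>d\<le>length []. reach n k (q @ []) (q @ replicate (length []) 0) d) \<and>
     (\<exists>s d. length s = length [] \<and> (\<forall>a\<in>set s. a \<noteq> 0 \<and> a < n) \<and> d \<le> length [] \<and>
        reach n k (q @ []) (q @ s) d)" by auto
  qed
next
  case (Cons c w)
  show ?case
  proof (intro allI impI)
    fix q :: "nat list"
    assume l: "length q + length (c # w) = k" and q: "\<forall>a\<in>set q. a < n" and t: "\<forall>a\<in>set (c # w). a < n"
    let ?r = "length (c # w)"
    have IH: "(\<exists>d\<le>length w. reach n k ((q@[c]) @ w) ((q@[c]) @ replicate (length w) 0) d) \<and>
     (\<exists>s d. length s = length w \<and> (\<forall>a\<in>set s. a \<noteq> 0 \<and> a < n) \<and> d \<le> length w \<and>
        reach n k ((q@[c]) @ w) ((q@[c]) @ s) d)"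
      using Cons.IH[rule_format, of "q@[c]"] l q t by auto
    have eq: "q @ c # w = (q @ [c]) @ w" by simp
    have A1: "\<exists>d\<le>?r. reach n k (q @ c # w) (q @ replicate ?r 0) d"
    proof (cases "c = 0")
      case True
      then show ?thesis using IH by (auto simp: replicate_append_same[symmetric]) (metis le_SucI)
    next
      case False
      then obtain s d where s: "length s = length w" "\<forall>a\<in>set s. a \<noteq> 0 \<and> a < n" "d \<le> length w"
        "reach n k (q @ c # w) (q @ c # s) d" using IH by auto
      have "hadj n k (q @ replicate ?r 0) (q @ (c # s))"
        by (rule adj1) (use l s q t False n2 in auto)
      then have "reach n k (q @ c # s) (q @ replicate ?r 0) 1" using hadj_sym reach_one by blast
      from reach_trans[OF s(4) this] show ?thesis using s(3) by (intro exI[of _ "d+1"]) auto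
    qed
    have A2: "\<exists>s d. length s = ?r \<and> (\<forall>a\<in>set s. a \<noteq> 0 \<and> a < n) \<and> d \<le> ?r \<and>
        reach n k (q @ c # w) (q @ s) d"
    proof (cases "c = 0")
      case False
      then obtain s d where s: "length s = length w" "\<forall>a\<in>set s. a \<noteq> 0 \<and> a < n" "d \<le> length w"
        "reach n k (q @ c # w) (q @ c # s) d" using IH by auto
      then show ?thesis using False t by (intro exI[of _ "c # s"] exI[of _ d]) auto
    next
      case True
      then obtain d where d: "d \<le> length w" "reach n k (q @ c # w) (q @ replicate ?r 0) d"
        using IH by (auto simp: replicate_append_same[symmetric])
      have "hadj n k (q @ replicate ?r 0) (q @ replicate ?r 1)"
        by (rule adj1) (use l q n2 in auto)
      from reach_trans[OF d(2) reach_one[OF this]] show ?thesis using d n2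
        by (intro exI[of _ "replicate ?r 1"] exI[of _ "d+1"]) auto
    qed
    show "(\<exists>d\<le>?r. reach n k (q @ c # w) (q @ replicate ?r 0) d) \<and>
     (\<exists>s d. length s = ?r \<and> (\<forall>a\<in>set s. a \<noteq> 0 \<and> a < n) \<and> d \<le> ?r \<and>
        reach n k (q @ c # w) (q @ s) d)" using A1 A2 by blast
  qed
qed

lemma zero_case:
  assumes n2: "n \<ge> 2" and x: "x = p @ 0 # t" and y: "y = p @ b # u" and b: "b \<noteq> 0" "b < n"
    and l: "length p + 1 + r = k" "length t = r" "length u = r"
    and e: "\<forall>a\<in>set p. a < n" "\<forall>a\<in>set t. a < n" "\<forall>a\<in>set u. a < n"
  shows "\<exists>d \<le> 2 * r + 1. reach n k x y d"
proof -
  have q0: "\<forall>a\<in>set (p@[0]). a < n" using e n2 by auto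
  have L0: "length (p@[0]) + length t = k" using l by simp
  obtain d1 where d1: "d1 \<le> r" "reach n k ((p@[0]) @ t) ((p@[0]) @ replicate r 0) d1"
    using mp[OF mp[OF mp[OF spec[OF core[OF n2, of t k], of "p@[0]"] L0] q0] e(2)] l(2) by auto
  obtain s d2 where d2: "length s = r" "\<forall>a\<in>set s. a \<noteq> 0 \<and> a < n" "d2 \<le> r"
    "reach n k ((p@[b]) @ u) ((p@[b]) @ s) d2"
    using core[OF n2, of u k, rule_format, of "p@[b]"] l e b by auto
  have "hadj n k (p @ replicate (Suc r) 0) (p @ (b # s))"
    by (rule adj1) (use l d2 b e n2 in auto)
  then have h: "reach n k (p @ replicate (Suc r) 0) (p @ b # s) 1" by (rule reach_one)
  have r1: "reach n k x (p @ replicate (Suc r) 0) d1" using d1 x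
    by (simp add: replicate_append_same[symmetric])
  have r2: "reach n k (p @ b # s) y d2" using reach_sym[OF d2(4)] y by simp
  from reach_trans[OF reach_trans[OF r1 h] r2] show ?thesis using d1 d2
    by (intro exI[of _ "d1 + 1 + d2"]) auto
qed

lemma nz_case:
  assumes n2: "n \<ge> 2" and x: "x = p @ a # t" and y: "y = p @ b # u" and b: "b \<noteq> 0" "b < n"
    and a: "a \<noteq> 0" "a < n" "a \<noteq> b"
    and l: "length p + 1 + r = k" "length t = r" "length u = r" "r \<ge> 1"
    and e: "\<forall>a\<in>set p. a < n" "\<forall>a\<in>set t. a < n" "\<forall>a\<in>set u. a < n"
  shows "\<exists>d \<le> 2 * r + 1. reach n k x y d"
proof -
  obtain d1 where d1: "d1 \<le> r" "reach n k ((p@[a]) @ t) ((p@[a]) @ replicate r 0) d1"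
    using core[OF n2, of t k, rule_format, of "p@[a]"] l e a by auto
  obtain d2 where d2: "d2 \<le> r" "reach n k ((p@[b]) @ u) ((p@[b]) @ replicate r 0) d2"
    using core[OF n2, of u k, rule_format, of "p@[b]"] l e b by auto
  have "hadj n k (p @ [a] @ replicate r 0) (p @ [b] @ replicate r 0)"
    by (rule adj3) (use l a b e in auto)
  then have h: "reach n k (p @ [a] @ replicate r 0) (p @ [b] @ replicate r 0) 1" by (rule reach_one)
  have r1: "reach n k x (p @ [a] @ replicate r 0) d1" using d1 x by simp
  have r2: "reach n k (p @ [b] @ replicate r 0) y d2" using reach_sym[OF d2(2)] y by simp
  from reach_trans[OF reach_trans[OF r1 h] r2] show ?thesis using d1 d2
    by (intro exI[of _ "d1 + 1 + d2"]) auto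
qed

theorem mainTheorem8:
  fixes n k i :: nat and x y :: "nat list"
  assumes "n \<ge> 2" and "k \<ge> 1"
    and "x \<in> hverts n k" and "y \<in> hverts n k" and "x \<noteq> y"
    and "i < k" and "take i x = take i y" and "x ! i \<noteq> y ! i"
  shows "hdist n k x y \<le> enat (2 * (k - i) - 1)"
proof -
  note hx = assms(3)[unfolded hverts_def, simplified] and hy = assms(4)[unfolded hverts_def, simplified]
  define p where "p = take i x"
  define a where "a = x ! i"
  define b where "b = y ! i"
  define t where "t = drop (Suc i) x"
  define u where "u = drop (Suc i) y"
  define r where "r = k - i - 1"
  have xe: "x = p @ a # t" unfolding p_def a_def t_def using hx assms(6) id_take_nth_drop by auto
  have ye: "y = p @ b # u" unfolding p_def b_def u_def using hy assms(6,7) id_take_nth_drop by metis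
  have ab: "a \<noteq> b" using assms(8) a_def b_def by simp
  have l: "length p + 1 + r = k" "length t = r" "length u = r"
    using hx hy assms(6) unfolding p_def t_def u_def r_def by auto
  have e: "\<forall>c\<in>set p. c < n" "\<forall>c\<in>set t. c < n" "\<forall>c\<in>set u. c < n" "a < n" "b < n"
    using hx hy xe ye by auto
  have K: "2 * (k - i) - 1 = 2 * r + 1" using assms(6) r_def by auto
  have "\<exists>d \<le> 2 * r + 1. reach n k x y d"
  proof (cases "r = 0")
    case True
    have "R1 k x y" unfolding R1_def using True l xe ye ab by (auto simp: nth_append)
    then have "hadj n k x y" using assms(3-5) by (auto simp: hadj_def)
    then show ?thesis using reach_one by fastforce
  next
    case False
    show ?thesis
    proof (cases "a = 0")
      case True
      show ?thesis by (rule zero_case[of n x p t y b u r k]) (use assms(1) xe ye True ab l e in auto)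
    next
      case a0: False
      show ?thesis
      proof (cases "b = 0")
        case True
        obtain d where "d \<le> 2 * r + 1" "reach n k y x d"
          using zero_case[of n y p u x a t r k] assms(1) xe ye True a0 l e by auto
        then show ?thesis using reach_sym by blast
      next
        case False
        show ?thesis by (rule nz_case[of n x p a t y b u r k]) (use assms(1) xe ye False a0 ab l e \<open>r \<noteq> 0\<close> in auto)
      qed
    qed
  qed
  then obtain d where d: "d \<le> 2 * r + 1" "reach n k x y d" by blast
  obtain ws where ws: "hwalk n k ws" "hd ws = x" "last ws = y" "length ws = Suc d"
    using reach_walk[OF d(2)] by blast
  have "hdist n k x y \<le> enat (length ws - 1)" unfolding hdist_def
    by (rule INF_lower) (use ws in auto)
  also have "\<dots> \<le> enat (2 * (k - i) - 1)" using ws d K by simp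
  finally show ?thesis .
qed

end
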